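(* Let $\kappa\in\mathbb{K}$, let $(\mathfrak{g},[-,-,-]_\mathfrak{g},\alpha_\mathfrak{g})$ and $(\mathfrak{h},[-,-,-]_\mathfrak{h},\alpha_\mathfrak{h})$ be Hom-Lie triple systems and $\theta$ an action of $\mathfrak{g}$ on $\mathfrak{h}$. A linear map $\mathcal{A}:\mathfrak{h}\to\mathfrak{g}$ is a $\kappa$-weighted $\mathcal{O}$-operator from $\mathfrak{h}$ to $\mathfrak{g}$ with respect to $\theta$ if and only if the linear map $N_\mathcal{A}:\mathfrak{g}\oplus\mathfrak{h}\to\mathfrak{g}\oplus\mathfrak{h}$, $N_\mathcal{A}(x+u)=x+\mathcal{A}u$ (block matrix $\begin{pmatrix}\mathrm{id}&\mathcal{A}\\0&0\end{pmatrix}$), is a Nijenhuis operator on the semidirect product Hom-Lie triple system $\mathfrak{g}\ltimes_\theta\mathfrak{h}$.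
   Context: All vector spaces are over a field $\mathbb{K}$ of characteristic zero. A Hom-Lie triple system $(\mathfrak{g},[-,-,-]_\mathfrak{g},\alpha_\mathfrak{g})$ is a vector space $\mathfrak{g}$ with a trilinear map $[-,-,-]_\mathfrak{g}$ and a linear map $\alpha_\mathfrak{g}$ with $\alpha_\mathfrak{g}([x,y,z]_\mathfrak{g})=[\alpha_\mathfrak{g}(x),\alpha_\mathfrak{g}(y),\alpha_\mathfrak{g}(z)]_\mathfrak{g}$ such that for all $x,y,z,a,b$: $[x,y,z]_\mathfrak{g}+[y,x,z]_\mathfrak{g}=0$; $[x,y,z]_\mathfrak{g}+[z,x,y]_\mathfrak{g}+[y,z,x]_\mathfrak{g}=0$; $[\alpha_\mathfrak{g}(a),\alpha_\mathfrak{g}(b),[x,y,z]_\mathfrak{g}]_\mathfrak{g}=[[a,b,x]_\mathfrak{g},\alpha_\mathfrak{g}(y),\alpha_\mathfrak{g}(z)]_\mathfrak{g}+[\alpha_\mathfrak{g}(x),[a,b,y]_\mathfrak{g},\alpha_\mathfrak{g}(z)]_\mathfrak{g}+[\alpha_\mathfrak{g}(x),\alpha_\mathfrak{g}(y),[a,b,z]_\mathfrak{g}]_\mathfrak{g}$. A representation of $\mathfrak{g}$ on $(V,\beta)$ is a bilinear map $\theta:\mathfrak{g}\times\mathfrak{g}\to\mathrm{End}(V)$ such that, with $D(x,y)=\theta(y,x)-\theta(x,y)$, for all $x,y,a,b$: $\theta(\alpha_\mathfrak{g}(x),\alpha_\mathfrak{g}(y))\circ\beta=\beta\circ\theta(x,y)$;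 $\theta(\alpha_\mathfrak{g}(a),\alpha_\mathfrak{g}(b))\theta(x,y)-\theta(\alpha_\mathfrak{g}(y),\alpha_\mathfrak{g}(b))\theta(x,a)-\theta(\alpha_\mathfrak{g}(x),[y,a,b]_\mathfrak{g})\circ\beta+D(\alpha_\mathfrak{g}(y),\alpha_\mathfrak{g}(a))\theta(x,b)=0$; $\theta(\alpha_\mathfrak{g}(a),\alpha_\mathfrak{g}(b))D(x,y)-D(\alpha_\mathfrak{g}(x),\alpha_\mathfrak{g}(y))\theta(a,b)+\theta([x,y,a]_\mathfrak{g},\alpha_\mathfrak{g}(b))\circ\beta+\theta(\alpha_\mathfrak{g}(a),[x,y,b]_\mathfrak{g})\circ\beta=0$. An action of $\mathfrak{g}$ on a Hom-Lie triple system $(\mathfrak{h},[-,-,-]_\mathfrak{h},\alpha_\mathfrak{h})$ is a representation $\theta$ of $\mathfrak{g}$ on $(\mathfrak{h},\alpha_\mathfrak{h})$ such that for all $x,y\in\mathfrak{g}$, $u,v,w\in\mathfrak{h}$: $\theta(\alpha_\mathfrak{g}(x),\alpha_\mathfrak{g}(y))[u,v,w]_\mathfrak{h}=[\theta(x,y)u,\alpha_\mathfrak{h}(v),\alpha_\mathfrak{h}(w)]_\mathfrak{h}+[\alpha_\mathfrak{h}(u),\theta(x,y)v,\alpha_\mathfrak{h}(w)]_\mathfrak{h}+[\alpha_\mathfrak{h}(u),\alpha_\mathfrak{h}(v),\theta(x,y)w]_\mathfrak{h}$ and $\theta(\alpha_\mathfrak{g}(x),\alpha_\mathfrak{g}(y))[u,v,w]_\mathfrak{h}=[\alpha_\mathfrak{h}(u),\alpha_\mathfrak{h}(v),\theta(x,y)w]_\mathfrak{h}=0$.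 The semidirect product $\mathfrak{g}\ltimes_\theta\mathfrak{h}$ is $\mathfrak{g}\oplus\mathfrak{h}$ with twist map $(\alpha_\mathfrak{g}\oplus\alpha_\mathfrak{h})(x+u)=\alpha_\mathfrak{g}(x)+\alpha_\mathfrak{h}(u)$ and bracket $[x+u,y+v,z+w]_\theta=[x,y,z]_\mathfrak{g}+D(x,y)w-\theta(x,z)v+\theta(y,z)u+\kappa[u,v,w]_\mathfrak{h}$; it is a Hom-Lie triple system. A $\kappa$-weighted $\mathcal{O}$-operator from $\mathfrak{h}$ to $\mathfrak{g}$ with respect to $\theta$ is a linear map $\mathcal{A}:\mathfrak{h}\to\mathfrak{g}$ with $\mathcal{A}\circ\alpha_\mathfrak{h}=\alpha_\mathfrak{g}\circ\mathcal{A}$ and $[\mathcal{A}u,\mathcal{A}v,\mathcal{A}w]_\mathfrak{g}=\mathcal{A}\big(D(\mathcal{A}u,\mathcal{A}v)w-\theta(\mathcal{A}u,\mathcal{A}w)v+\theta(\mathcal{A}v,\mathcal{A}w)u+\kappa[u,v,w]_\mathfrak{h}\big)$ for all $u,v,w\in\mathfrak{h}$. A Nijenhuis operator on a Hom-Lie triple system $(L,[-,-,-],\alpha)$ is a linear map $N:L\to L$ with $N\circ\alpha=\alpha\circ N$ and, for all $x,y,z\in L$, $[Nx,Ny,Nz]=N([x,Ny,Nz]+[Nx,y,Nz]+[Nx,Ny,z])-N^2([Nx,y,z]+[x,Ny,z]+[x,y,Nz])+N^3[x,y,z]$. *)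

theory Defs
  imports "HOL-Analysis.Analysis"
begin

text \<open>Vector spaces over a field 'k of characteristic zero are represented by a type
 'v::ab_group_add together with a scalar multiplication s satisfying vector_space s.\<close>

definition trilinear ::
  "('k::field \<Rightarrow> 'a::ab_group_add \<Rightarrow> 'a) \<Rightarrow> ('a \<Rightarrow> 'a \<Rightarrow> 'a \<Rightarrow> 'a) \<Rightarrow> bool" where
  "trilinear s br \<longleftrightarrow>
     (\<forall>y z. Vector_Spaces.linear s s (\<lambda>x. br x y z)) \<and>
     (\<forall>x z. Vector_Spaces.linear s s (\<lambda>y. br x y z)) \<and>
     (\<forall>x y. Vector_Spaces.linear s s (\<lambda>z. br x y z))"

definition HomLTS ::
  "('k::field_char_0 \<Rightarrow> 'a::ab_group_add \<Rightarrow> 'a) \<Rightarrow> ('a \<Rightarrow> 'a \<Rightarrow> 'a \<Rightarrow> 'a) \<Rightarrow> ('a \<Rightarrow> 'a) \<Rightarrow> bool" where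
  "HomLTS s br al \<longleftrightarrow>
     vector_space s \<and> trilinear s br \<and> Vector_Spaces.linear s s al \<and>
     (\<forall>x y z. al (br x y z) = br (al x) (al y) (al z)) \<and>
     (\<forall>x y z. br x y z + br y x z = 0) \<and>
     (\<forall>x y z. br x y z + br z x y + br y z x = 0) \<and>
     (\<forall>a b x y z. br (al a) (al b) (br x y z) =
        br (br a b x) (al y) (al z) + br (al x) (br a b y) (al z) + br (al x) (al y) (br a b z))"

definition Dop :: "('g \<Rightarrow> 'g \<Rightarrow> 'v \<Rightarrow> 'v::ab_group_add) \<Rightarrow> 'g \<Rightarrow> 'g \<Rightarrow> 'v \<Rightarrow> 'v" where
  "Dop \<theta> x y = (\<lambda>v. \<theta> y x v - \<theta> x y v)"

text \<open>Representation of (g, brg, alg) on (V, beta); theta x y is an endomorphism of V,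
  and theta is bilinear into End(V). Composition of endomorphisms is written pointwise.\<close>
definition HomLTS_rep ::
  "('k::field_char_0 \<Rightarrow> 'g::ab_group_add \<Rightarrow> 'g) \<Rightarrow> ('g \<Rightarrow> 'g \<Rightarrow> 'g \<Rightarrow> 'g) \<Rightarrow> ('g \<Rightarrow> 'g) \<Rightarrow>
   ('k \<Rightarrow> 'v::ab_group_add \<Rightarrow> 'v) \<Rightarrow> ('v \<Rightarrow> 'v) \<Rightarrow> ('g \<Rightarrow> 'g \<Rightarrow> 'v \<Rightarrow> 'v) \<Rightarrow> bool" where
  "HomLTS_rep sg brg alg sv beta \<theta> \<longleftrightarrow>
     vector_space sv \<and> Vector_Spaces.linear sv sv beta \<and>
     (\<forall>x y. Vector_Spaces.linear sv sv (\<theta> x y)) \<and>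
     (\<forall>y v. Vector_Spaces.linear sg sv (\<lambda>x. \<theta> x y v)) \<and>
     (\<forall>x v. Vector_Spaces.linear sg sv (\<lambda>y. \<theta> x y v)) \<and>
     (\<forall>x y v. \<theta> (alg x) (alg y) (beta v) = beta (\<theta> x y v)) \<and>
     (\<forall>a b x y v.
        \<theta> (alg a) (alg b) (\<theta> x y v) - \<theta> (alg y) (alg b) (\<theta> x a v)
        - \<theta> (alg x) (brg y a b) (beta v) + Dop \<theta> (alg y) (alg a) (\<theta> x b v) = 0) \<and>
     (\<forall>a b x y v.
        \<theta> (alg a) (alg b) (Dop \<theta> x y v) - Dop \<theta> (alg x) (alg y) (\<theta> a b v)
        + \<theta> (brg x y a) (alg b) (beta v) + \<theta> (alg a) (brg x y b) (beta v) = 0)"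

definition HomLTS_action ::
  "('k::field_char_0 \<Rightarrow> 'g::ab_group_add \<Rightarrow> 'g) \<Rightarrow> ('g \<Rightarrow> 'g \<Rightarrow> 'g \<Rightarrow> 'g) \<Rightarrow> ('g \<Rightarrow> 'g) \<Rightarrow>
   ('k \<Rightarrow> 'h::ab_group_add \<Rightarrow> 'h) \<Rightarrow> ('h \<Rightarrow> 'h \<Rightarrow> 'h \<Rightarrow> 'h) \<Rightarrow> ('h \<Rightarrow> 'h) \<Rightarrow>
   ('g \<Rightarrow> 'g \<Rightarrow> 'h \<Rightarrow> 'h) \<Rightarrow> bool" where
  "HomLTS_action sg brg alg sh brh alh \<theta> \<longleftrightarrow>
     HomLTS_rep sg brg alg sh alh \<theta> \<and>
     (\<forall>x y u v w. \<theta> (alg x) (alg y) (brh u v w) =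
        brh (\<theta> x y u) (alh v) (alh w) + brh (alh u) (\<theta> x y v) (alh w) + brh (alh u) (alh v) (\<theta> x y w)) \<and>
     (\<forall>x y u v w. \<theta> (alg x) (alg y) (brh u v w) = 0 \<and> brh (alh u) (alh v) (\<theta> x y w) = 0)"

definition sd_scale :: "('k \<Rightarrow> 'g \<Rightarrow> 'g) \<Rightarrow> ('k \<Rightarrow> 'h \<Rightarrow> 'h) \<Rightarrow> 'k \<Rightarrow> 'g \<times> 'h \<Rightarrow> 'g \<times> 'h" where
  "sd_scale sg sh c p = (sg c (fst p), sh c (snd p))"

definition sd_twist :: "('g \<Rightarrow> 'g) \<Rightarrow> ('h \<Rightarrow> 'h) \<Rightarrow> 'g \<times> 'h \<Rightarrow> 'g \<times> 'h" where
  "sd_twist alg alh p = (alg (fst p), alh (snd p))"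

definition sd_bracket ::
  "('k \<Rightarrow> 'h::ab_group_add \<Rightarrow> 'h) \<Rightarrow> 'k \<Rightarrow> ('g \<Rightarrow> 'g \<Rightarrow> 'g \<Rightarrow> 'g) \<Rightarrow> ('h \<Rightarrow> 'h \<Rightarrow> 'h \<Rightarrow> 'h) \<Rightarrow>
   ('g \<Rightarrow> 'g \<Rightarrow> 'h \<Rightarrow> 'h) \<Rightarrow> 'g \<times> 'h \<Rightarrow> 'g \<times> 'h \<Rightarrow> 'g \<times> 'h \<Rightarrow> 'g \<times> 'h" where
  "sd_bracket sh \<kappa> brg brh \<theta> p q r =
     (brg (fst p) (fst q) (fst r),
      Dop \<theta> (fst p) (fst q) (snd r) - \<theta> (fst p) (fst r) (snd q) + \<theta> (fst q) (fst r) (snd p)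
      + sh \<kappa> (brh (snd p) (snd q) (snd r)))"

definition weighted_O_operator ::
  "('k \<Rightarrow> 'h::ab_group_add \<Rightarrow> 'h) \<Rightarrow> 'k \<Rightarrow> ('g \<Rightarrow> 'g \<Rightarrow> 'g \<Rightarrow> 'g) \<Rightarrow> ('g \<Rightarrow> 'g) \<Rightarrow>
   ('h \<Rightarrow> 'h \<Rightarrow> 'h \<Rightarrow> 'h) \<Rightarrow> ('h \<Rightarrow> 'h) \<Rightarrow> ('g \<Rightarrow> 'g \<Rightarrow> 'h \<Rightarrow> 'h) \<Rightarrow> ('h \<Rightarrow> 'g) \<Rightarrow> bool" where
  "weighted_O_operator sh \<kappa> brg alg brh alh \<theta> A \<longleftrightarrow>
     (\<forall>u. A (alh u) = alg (A u)) \<and>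
     (\<forall>u v w. brg (A u) (A v) (A w) =
        A (Dop \<theta> (A u) (A v) w - \<theta> (A u) (A w) v + \<theta> (A v) (A w) u + sh \<kappa> (brh u v w)))"

definition Nijenhuis ::
  "('k::field \<Rightarrow> 'a::ab_group_add \<Rightarrow> 'a) \<Rightarrow> ('a \<Rightarrow> 'a \<Rightarrow> 'a \<Rightarrow> 'a) \<Rightarrow> ('a \<Rightarrow> 'a) \<Rightarrow> ('a \<Rightarrow> 'a) \<Rightarrow> bool" where
  "Nijenhuis s br al N \<longleftrightarrow>
     Vector_Spaces.linear s s N \<and> (\<forall>x. N (al x) = al (N x)) \<and>
     (\<forall>x y z. br (N x) (N y) (N z) =
        N (br x (N y) (N z) + br (N x) y (N z) + br (N x) (N y) z)
        - N (N (br (N x) y z + br x (N y) z + br x y (N z)))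
        + N (N (N (br x y z))))"

definition N_op :: "('h \<Rightarrow> 'g::ab_group_add) \<Rightarrow> 'g \<times> 'h \<Rightarrow> 'g \<times> ('h::zero)" where
  "N_op A p = (fst p + A (snd p), 0)"

end

theory Submission
  imports Defs
begin

lemma la: "Vector_Spaces.linear s1 s2 f \<Longrightarrow> f (x+y) = f x + f y"
  by (simp add: Vector_Spaces.linear_iff)
lemma ls: "Vector_Spaces.linear s1 s2 f \<Longrightarrow> f (s1 c x) = s2 c (f x)"
  by (simp add: Vector_Spaces.linear_iff)
lemma ln: "Vector_Spaces.linear s1 s2 f \<Longrightarrow> f (- x) = - f x"
  by (metis module_hom.neg module_hom_iff_linear)
lemma l0: "Vector_Spaces.linear s1 s2 f \<Longrightarrow> f 0 = 0"
  by (metis module_hom.zero module_hom_iff_linear)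
lemma vsa: "vector_space s \<Longrightarrow> s c (x+y) = s c x + s c y"
  by (simp add: vector_space_def)
lemma vsn: "vector_space s \<Longrightarrow> s c (- x) = - s c x"
  by (metis module.scale_minus_right module_iff_vector_space)
lemma vs0: "vector_space s \<Longrightarrow> s c 0 = 0"
  by (metis module.scale_zero_right module_iff_vector_space)

lemma expand3:
  fixes br :: "'a::ab_group_add \<Rightarrow> 'a \<Rightarrow> 'a \<Rightarrow> 'a"
  assumes b1: "\<And>p p' q r. br (p+p') q r = br p q r + br p' q r"
    and b2: "\<And>p q q' r. br p (q+q') r = br p q r + br p q' r"
    and b3: "\<And>p q r r'. br p q (r+r') = br p q r + br p q r'"
  shows "br (p+a) (q+b) (r+c) - (br p (q+b) (r+c) + br (p+a) q (r+c) + br (p+a) (q+b) r)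
     + (br (p+a) q r + br p (q+b) r + br p q (r+c)) - br p q r = br a b c"
  by (simp add: b1 b2 b3 algebra_simps)

lemma vs_prod:
  assumes "vector_space sg" "vector_space sh"
  shows "vector_space (sd_scale sg sh)"
  using assms unfolding vector_space_def sd_scale_def by auto

lemma tri_facts:
  assumes "trilinear s br"
  shows "br (x+x') y z = br x y z + br x' y z" "br x (y+y') z = br x y z + br x y' z"
    "br x y (z+z') = br x y z + br x y z'" "br (-x) (-y) (-z) = - br x y z" "br 0 0 0 = 0"
proof -
  have l1: "Vector_Spaces.linear s s (\<lambda>x. br x y z)" for y z using assms unfolding trilinear_def by blast
  have l2: "Vector_Spaces.linear s s (\<lambda>y. br x y z)" for x z using assms unfolding trilinear_def by blast
  have l3: "Vector_Spaces.linear s s (\<lambda>z. br x y z)" for x y using assms unfolding trilinear_def by blast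
  show "br (x+x') y z = br x y z + br x' y z" using la[OF l1] .
  show "br x (y+y') z = br x y z + br x y' z" using la[OF l2] .
  show "br x y (z+z') = br x y z + br x y z'" using la[OF l3] .
  have "br (-x) (-y) (-z) = - br x (-y) (-z)" using ln[OF l1] .
  also have "\<dots> = - (- br x y (-z))" using ln[OF l2] by simp
  also have "\<dots> = - br x y z" using ln[OF l3] by simp
  finally show "br (-x) (-y) (-z) = - br x y z" .
  show "br 0 0 0 = 0" using l0[OF l3] .
qed

theorem mainTheorem3:
  fixes sg :: "'k::field_char_0 \<Rightarrow> 'g::ab_group_add \<Rightarrow> 'g"
    and sh :: "'k \<Rightarrow> 'h::ab_group_add \<Rightarrow> 'h"
    and \<kappa> :: 'k
    and brg :: "'g \<Rightarrow> 'g \<Rightarrow> 'g \<Rightarrow> 'g" and alg :: "'g \<Rightarrow> 'g"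
    and brh :: "'h \<Rightarrow> 'h \<Rightarrow> 'h \<Rightarrow> 'h" and alh :: "'h \<Rightarrow> 'h"
    and \<theta> :: "'g \<Rightarrow> 'g \<Rightarrow> 'h \<Rightarrow> 'h"
    and A :: "'h \<Rightarrow> 'g"
  assumes "HomLTS sg brg alg"
    and "HomLTS sh brh alh"
    and "HomLTS_action sg brg alg sh brh alh \<theta>"
    and "Vector_Spaces.linear sh sg A"
  shows "weighted_O_operator sh \<kappa> brg alg brh alh \<theta> A \<longleftrightarrow>
         Nijenhuis (sd_scale sg sh) (sd_bracket sh \<kappa> brg brh \<theta>) (sd_twist alg alh) (N_op A)"
proof -
  have vg: "vector_space sg" and tg: "trilinear sg brg" and lalg: "Vector_Spaces.linear sg sg alg"
    using assms(1) unfolding HomLTS_def by auto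
  have vh: "vector_space sh" and th: "trilinear sh brh" and lalh: "Vector_Spaces.linear sh sh alh"
    using assms(2) unfolding HomLTS_def by auto
  have rep: "HomLTS_rep sg brg alg sh alh \<theta>" using assms(3) unfolding HomLTS_action_def by auto
  have t3: "\<And>x y. Vector_Spaces.linear sh sh (\<theta> x y)"
    and t1: "\<And>y v. Vector_Spaces.linear sg sh (\<lambda>x. \<theta> x y v)"
    and t2: "\<And>x v. Vector_Spaces.linear sg sh (\<lambda>y. \<theta> x y v)"
    using rep unfolding HomLTS_rep_def by auto
  have bg1: "\<And>x x' y z. brg (x+x') y z = brg x y z + brg x' y z"
    and bg2: "\<And>x y y' z. brg x (y+y') z = brg x y z + brg x y' z"
    and bg3: "\<And>x y z z'. brg x y (z+z') = brg x y z + brg x y z'"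
    using tri_facts[OF tg] by auto
  have bh1: "\<And>x x' y z. brh (x+x') y z = brh x y z + brh x' y z"
    and bh2: "\<And>x y y' z. brh x (y+y') z = brh x y z + brh x y' z"
    and bh3: "\<And>x y z z'. brh x y (z+z') = brh x y z + brh x y z'"
    and hn: "\<And>x y z. brh (-x) (-y) (-z) = - brh x y z"
    and h0: "brh 0 0 0 = 0"
    using tri_facts[OF th] by auto
  have ta1: "\<And>x x' y v. \<theta> (x+x') y v = \<theta> x y v + \<theta> x' y v"
    using t1 by (rule la)
  have ta2: "\<And>x y y' v. \<theta> x (y+y') v = \<theta> x y v + \<theta> x y' v"
    using t2 by (rule la)
  have ta3: "\<And>x y v v'. \<theta> x y (v+v') = \<theta> x y v + \<theta> x y v'"
    using t3 by (rule la)
  have tn: "\<And>x y v. \<theta> x y (-v) = - \<theta> x y v"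
    using t3 by (rule ln)
  have tz: "\<And>x y. \<theta> x y 0 = 0"
    using t3 by (rule l0)
  have Aa: "\<And>u v. A (u+v) = A u + A v" using assms(4) by (rule la)
  have An: "\<And>u. A (-u) = - A u" using assms(4) by (rule ln)
  have Az: "A 0 = 0" using assms(4) by (rule l0)
  have Ad: "\<And>u v. A (u - v) = A u - A v" using assms(4) by (metis module_hom.diff module_hom_iff_linear)
  have sa: "\<And>c x y. sh c (x+y) = sh c x + sh c y" using vh by (rule vsa)
  have sn: "\<And>c x. sh c (-x) = - sh c x" using vh by (rule vsn)
  have sz: "\<And>c. sh c 0 = 0" using vh by (rule vs0)
  define br where "br = sd_bracket sh \<kappa> brg brh \<theta>"
  define N where "N = N_op A"
  define K where "K = (\<lambda>p::'g\<times>'h. (A (snd p), - snd p))"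
  have b1: "\<And>p p' q r. br (p+p') q r = br p q r + br p' q r"
    unfolding br_def sd_bracket_def Dop_def
    by (simp add: bg1 ta1 ta2 ta3 sa bh1 algebra_simps)
  have b2: "\<And>p q q' r. br p (q+q') r = br p q r + br p q' r"
    unfolding br_def sd_bracket_def Dop_def
    by (simp add: bg2 ta1 ta2 ta3 sa bh2 algebra_simps)
  have b3: "\<And>p q r r'. br p q (r+r') = br p q r + br p q r'"
    unfolding br_def sd_bracket_def Dop_def
    by (simp add: bg3 ta1 ta2 ta3 sa bh3 algebra_simps)
  have NK: "\<And>p. N p = p + K p" unfolding N_def N_op_def K_def by (simp add: prod_eq_iff)
  have NN: "\<And>z. N (N z) = N z" unfolding N_def N_op_def by (simp add: Az)
  have Nadd: "\<And>a b. N (a + b) = N a + N b" unfolding N_def N_op_def by (simp add: Aa)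
  have Ndiff: "\<And>a b. N (a - b) = N a - N b" unfolding N_def N_op_def
    by (simp add: Ad)
  have Nbr: "\<And>p q r. br (N p) (N q) (N r) = N (br (N p) (N q) (N r))"
    unfolding N_def N_op_def br_def sd_bracket_def Dop_def by (simp add: tz h0 sz Az)
  define P where "P = (\<lambda>u v w. brg (A u) (A v) (A w) =
        A (Dop \<theta> (A u) (A v) w - \<theta> (A u) (A w) v + \<theta> (A v) (A w) u + sh \<kappa> (brh u v w)))"
  have NKKK: "\<And>p q r. N (br (K p) (K q) (K r)) = 0 \<longleftrightarrow> P (snd p) (snd q) (snd r)"
  proof -
    fix p q r :: "'g \<times> 'h"
    define u where "u = snd p"
    define v where "v = snd q"
    define w where "w = snd r"
    define T where "T = Dop \<theta> (A u) (A v) w - \<theta> (A u) (A w) v + \<theta> (A v) (A w) u + sh \<kappa> (brh u v w)"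
    have inner: "Dop \<theta> (A u) (A v) (-w) - \<theta> (A u) (A w) (-v) + \<theta> (A v) (A w) (-u)
       + sh \<kappa> (brh (-u) (-v) (-w)) = - T"
      unfolding T_def Dop_def by (simp add: tn hn sn algebra_simps)
    have "N (br (K p) (K q) (K r)) = (brg (A u) (A v) (A w) + A (- T), 0)"
      unfolding N_def N_op_def br_def sd_bracket_def K_def u_def v_def w_def
      using inner unfolding u_def v_def w_def by simp
    also have "\<dots> = (brg (A u) (A v) (A w) - A T, 0)" by (simp add: An)
    finally have "N (br (K p) (K q) (K r)) = (brg (A u) (A v) (A w) - A T, 0)" .
    then show "N (br (K p) (K q) (K r)) = 0 \<longleftrightarrow> P (snd p) (snd q) (snd r)"
      unfolding P_def T_def u_def v_def w_def by (simp add: zero_prod_def)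
  qed
  have cond: "\<And>p q r. (br (N p) (N q) (N r) =
        N (br p (N q) (N r) + br (N p) q (N r) + br (N p) (N q) r)
        - N (N (br (N p) q r + br p (N q) r + br p q (N r)))
        + N (N (N (br p q r)))) \<longleftrightarrow> P (snd p) (snd q) (snd r)"
  proof -
    fix p q r
    have e: "br (N p) (N q) (N r) - (br p (N q) (N r) + br (N p) q (N r) + br (N p) (N q) r)
     + (br (N p) q r + br p (N q) r + br p q (N r)) - br p q r = br (K p) (K q) (K r)"
      unfolding NK by (rule expand3[OF b1 b2 b3])
    have "(br (N p) (N q) (N r) =
        N (br p (N q) (N r) + br (N p) q (N r) + br (N p) (N q) r)
        - N (N (br (N p) q r + br p (N q) r + br p q (N r)))
        + N (N (N (br p q r)))) \<longleftrightarrow>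
        N (br (N p) (N q) (N r)) - (N (br p (N q) (N r) + br (N p) q (N r) + br (N p) (N q) r)
        - N (br (N p) q r + br p (N q) r + br p q (N r))
        + N (br p q r)) = 0"
      by (subst Nbr[symmetric]) (simp add: NN)
    also have "\<dots> \<longleftrightarrow> N (br (K p) (K q) (K r)) = 0"
      unfolding e[symmetric] by (simp add: Nadd Ndiff algebra_simps)
    finally show "?thesis p q r" using NKKK by simp
  qed
  have lin: "Vector_Spaces.linear (sd_scale sg sh) (sd_scale sg sh) (N_op A)"
    unfolding Vector_Spaces.linear_iff
    using vs_prod[OF vg vh] assms(4)
    by (auto simp: N_op_def sd_scale_def Aa ls vsa[OF vg] sz)
  have twist: "(\<forall>x. N_op A (sd_twist alg alh x) = sd_twist alg alh (N_op A x)) \<longleftrightarrow>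
      (\<forall>u. A (alh u) = alg (A u))"
  proof
    assume h: "\<forall>x. N_op A (sd_twist alg alh x) = sd_twist alg alh (N_op A x)"
    show "\<forall>u. A (alh u) = alg (A u)"
    proof
      fix u
      from h[rule_format, of "(0,u)"] show "A (alh u) = alg (A u)"
        by (simp add: N_op_def sd_twist_def l0[OF lalg])
    qed
  next
    assume h: "\<forall>u. A (alh u) = alg (A u)"
    then show "\<forall>x. N_op A (sd_twist alg alh x) = sd_twist alg alh (N_op A x)"
      by (simp add: N_op_def sd_twist_def la[OF lalg] l0[OF lalh])
  qed
  have "(\<forall>p q r. P (snd p) (snd q) (snd r)) \<longleftrightarrow> (\<forall>u v w. P u v w)"
    by (metis snd_conv)
  then show ?thesis
    unfolding weighted_O_operator_def Nijenhuis_def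
    using cond twist lin unfolding br_def N_def P_def by simp
qed

end
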